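(* Let $\eta,\varepsilon,\alpha_1,\alpha_2\in\mathbb R$. Let $\phi_h,u_h,v_h,w_h$ be continuously differentiable in $t$ with values in $V_h$ and satisfy, for every $j$ and all $\varphi_1,\dots,\varphi_4\in V_h$, $$\tfrac12\int_{I_j}\partial_tu_h\varphi_1dx-\int_{I_j}w_h\partial_x\varphi_1dx+(\widehat{w_h}\varphi_1^-)_{j+\frac12}-(\widehat{w_h}\varphi_1^+)_{j-\frac12}=0,$$ $$-\tfrac12\int_{I_j}\partial_t\phi_h\varphi_2dx+\varepsilon\Big(\int_{I_j}v_h\partial_x\varphi_2dx-(\widehat{v_h}\varphi_2^-)_{j+\frac12}+(\widehat{v_h}\varphi_2^+)_{j-\frac12}\Big)=\int_{I_j}\big(-w_h+\tfrac\eta2u_h^2\big)\varphi_2dx,$$ $$\varepsilon\Big(-\int_{I_j}u_h\partial_x\varphi_3dx+(\widehat{u_h}\varphi_3^-)_{j+\frac12}-(\widehat{u_h}\varphi_3^+)_{j-\frac12}\Big)=\int_{I_j}v_h\varphi_3dx,$$ $$\int_{I_j}\phi_h\partial_x\varphi_4dx-(\widehat{\phi_h}\varphi_4^-)_{j+\frac12}+(\widehat{\phi_h}\varphi_4^+)_{j-\frac12}=-\int_{I_j}u_h\varphi_4dx,$$ with interface fluxes $\widehat{w_h}=\{w_h\}+\alpha_1[w_h]$, $\widehat{v_h}=\{v_h\}-\alpha_2[v_h]$, $\widehat{u_h}=\{u_h\}+\alpha_2[u_h]$, $\widehat{\phi_h}=\{\phi_h\}-\alpha_1[\phi_h]$.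 Then the discrete energy $$\mathcal E_h=\int_\Omega\Big(\tfrac\eta6u_h^3-\tfrac12v_h^2\Big)dx$$ is constant in time.
   Context: This is a DG discretization of the KdV equation $u_t+\eta uu_x+\varepsilon^2u_{xxx}=0$ in the multi-symplectic form $\frac12u_t+w_x=0$, $-\frac12\phi_t-\varepsilon v_x=-w+\frac\eta2u^2$, $\varepsilon u_x=v$, $-\phi_x=-u$. Mesh and spaces: a one-dimensional domain $\Omega$ is partitioned into cells $I_j=[x_{j-1/2},x_{j+1/2}]$, $j=1,\dots,N$, with periodic boundary conditions (interface indices modulo $N$). For fixed $k\ge0$, $V_h=\{v\in L^2(\Omega): v|_{I_j}\text{ is a polynomial of degree}\le k\ \forall j\}$. For $v\in V_h$, $v^\pm_{j+1/2}$ are its right/left limits at $x_{j+1/2}$, $\{v\}=\frac12(v^++v^-)$, $[v]=v^+-v^-$; subscript $j\pm\frac12$ denotes evaluation at $x_{j\pm1/2}$. *)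

theory Defs
  imports "HOL-Analysis.Analysis" "HOL-Computational_Algebra.Polynomial"
begin

text \<open>Mesh: nodes x 0 < x 1 < ... < x N; cell j (0 \<le> j < N) is [x j, x (Suc j)].
  The interface to the right of cell j is x (Suc j); periodicity identifies x N with x 0,
  so the right neighbour of cell j is cell (Suc j mod N).
  An element of V_h is represented by its cell polynomials v :: nat \<Rightarrow> real poly.\<close>

definition in_Vh :: "nat \<Rightarrow> nat \<Rightarrow> (nat \<Rightarrow> real poly) \<Rightarrow> bool" where
  "in_Vh N k v \<longleftrightarrow> (\<forall>j<N. degree (v j) \<le> k)"

definition cint :: "(nat \<Rightarrow> real) \<Rightarrow> nat \<Rightarrow> (real \<Rightarrow> real) \<Rightarrow> real" where
  "cint x j f = integral {x j..x (Suc j)} f"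

definition tr_minus :: "(nat \<Rightarrow> real) \<Rightarrow> (nat \<Rightarrow> real poly) \<Rightarrow> nat \<Rightarrow> real" where
  "tr_minus x v j = poly (v j) (x (Suc j))"

definition tr_plus :: "nat \<Rightarrow> (nat \<Rightarrow> real) \<Rightarrow> (nat \<Rightarrow> real poly) \<Rightarrow> nat \<Rightarrow> real" where
  "tr_plus N x v j = poly (v (Suc j mod N)) (x (Suc j mod N))"

definition flux :: "nat \<Rightarrow> (nat \<Rightarrow> real) \<Rightarrow> real \<Rightarrow> (nat \<Rightarrow> real poly) \<Rightarrow> nat \<Rightarrow> real" where
  "flux N x a v j = (tr_plus N x v j + tr_minus x v j) / 2 + a * (tr_plus N x v j - tr_minus x v j)"

text \<open>Index of the left neighbour cell (periodic); its right interface is the left interface of j.\<close>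
definition prev_cell :: "nat \<Rightarrow> nat \<Rightarrow> nat" where
  "prev_cell N j = (j + N - 1) mod N"

definition C1_Vh :: "nat \<Rightarrow> nat \<Rightarrow> real set \<Rightarrow> (real \<Rightarrow> nat \<Rightarrow> real poly) \<Rightarrow> (real \<Rightarrow> nat \<Rightarrow> real poly) \<Rightarrow> bool" where
  "C1_Vh N k T v vt \<longleftrightarrow>
     (\<forall>t\<in>T. in_Vh N k (v t) \<and> in_Vh N k (vt t)) \<and>
     (\<forall>j<N. \<forall>i. (\<forall>t\<in>T. ((\<lambda>s. coeff (v s j) i) has_real_derivative coeff (vt t j) i) (at t within T))
                \<and> continuous_on T (\<lambda>s. coeff (vt s j) i))"

definition energy :: "nat \<Rightarrow> (nat \<Rightarrow> real) \<Rightarrow> real \<Rightarrow> (nat \<Rightarrow> real poly) \<Rightarrow> (nat \<Rightarrow> real poly) \<Rightarrow> real" where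
  "energy N x \<eta> u v = (\<Sum>j<N. cint x j (\<lambda>y. \<eta> / 6 * poly (u j) y ^ 3 - 1/2 * poly (v j) y ^ 2))"

end

theory Submission
  imports Defs
begin

definition hasd :: "real set \<Rightarrow> real \<Rightarrow> (real \<Rightarrow> real poly) \<Rightarrow> real poly \<Rightarrow> bool" where
  "hasd T r p pt \<longleftrightarrow> (\<forall>i. ((\<lambda>s. coeff (p s) i) has_real_derivative coeff pt i) (at r within T))"

lemma hasd_mult:
  assumes "hasd T r p pt" "hasd T r q qt"
  shows "hasd T r (\<lambda>s. p s * q s) (pt * q r + p r * qt)"
  unfolding hasd_def
proof
  fix n
  have "((\<lambda>s. \<Sum>i\<le>n. coeff (p s) i * coeff (q s) (n-i)) has_real_derivative
      (\<Sum>i\<le>n. coeff pt i * coeff (q r) (n-i) + coeff (p r) i * coeff qt (n-i))) (at r within T)"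
    proof (rule DERIV_sum)
    fix i assume "i \<in> {..n}"
    show "((\<lambda>s. coeff (p s) i * coeff (q s) (n-i)) has_real_derivative
      coeff pt i * coeff (q r) (n-i) + coeff (p r) i * coeff qt (n-i)) (at r within T)"
      using DERIV_mult'[of "\<lambda>s. coeff (p s) i" "coeff pt i" r T "\<lambda>s. coeff (q s) (n-i)" "coeff qt (n-i)"]
        assms unfolding hasd_def by (simp add: add.commute)
  qed
  then show "((\<lambda>s. coeff (p s * q s) n) has_real_derivative coeff (pt * q r + p r * qt) n) (at r within T)"
    by (simp add: coeff_mult sum.distrib)
qed

lemma hasd_add:
  assumes "hasd T r p pt" "hasd T r q qt"
  shows "hasd T r (\<lambda>s. p s + q s) (pt + qt)"
  using assms unfolding hasd_def by (auto intro!: derivative_intros)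

lemma hasd_diff:
  assumes "hasd T r p pt" "hasd T r q qt"
  shows "hasd T r (\<lambda>s. p s - q s) (pt - qt)"
  using assms unfolding hasd_def by (auto intro!: derivative_intros)

lemma hasd_smult:
  assumes "hasd T r p pt"
  shows "hasd T r (\<lambda>s. smult c (p s)) (smult c pt)"
  using assms unfolding hasd_def by (auto intro!: DERIV_cmult)

lemma lin_sum:
  fixes \<Phi> :: "real poly \<Rightarrow> real"
  assumes add: "\<And>p q. \<Phi> (p + q) = \<Phi> p + \<Phi> q" and sm: "\<And>c p. \<Phi> (smult c p) = c * \<Phi> p"
  shows "finite A \<Longrightarrow> \<Phi> (\<Sum>i\<in>A. f i) = (\<Sum>i\<in>A. \<Phi> (f i))"
proof (induction A rule: finite_induct)
  case empty
  have "\<Phi> (smult 0 0) = 0" by (simp only: sm mult_zero_left)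
  then show ?case by simp
next
  case (insert a A) then show ?case by (simp add: add)
qed

lemma lin_expand:
  fixes \<Phi> :: "real poly \<Rightarrow> real"
  assumes add: "\<And>p q. \<Phi> (p + q) = \<Phi> p + \<Phi> q" and sm: "\<And>c p. \<Phi> (smult c p) = c * \<Phi> p"
    and "degree p \<le> D"
  shows "\<Phi> p = (\<Sum>i\<le>D. coeff p i * \<Phi> (monom 1 i))"
proof -
  have "\<Phi> p = \<Phi> (\<Sum>i\<le>D. monom (coeff p i) i)" using poly_as_sum_of_monoms'[OF assms(3)] by simp
  also have "\<dots> = (\<Sum>i\<le>D. \<Phi> (monom (coeff p i) i))" by (rule lin_sum[OF add sm]) auto
  also have "\<dots> = (\<Sum>i\<le>D. coeff p i * \<Phi> (monom 1 i))"
    proof (intro sum.cong refl)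
    fix i
    have "monom (coeff p i) i = smult (coeff p i) (monom 1 i)" by (simp add: smult_monom)
    then show "\<Phi> (monom (coeff p i) i) = coeff p i * \<Phi> (monom 1 i)" by (simp add: sm)
  qed
  finally show ?thesis .
qed

lemma lin_deriv:
  fixes \<Phi> :: "real poly \<Rightarrow> real"
  assumes add: "\<And>p q. \<Phi> (p + q) = \<Phi> p + \<Phi> q" and sm: "\<And>c p. \<Phi> (smult c p) = c * \<Phi> p"
    and hd: "hasd T r p pt" and deg: "\<forall>s\<in>T. degree (p s) \<le> D" and degt: "degree pt \<le> D"
    and r: "r \<in> T"
  shows "((\<lambda>s. \<Phi> (p s)) has_real_derivative \<Phi> pt) (at r within T)"
proof -
  have "((\<lambda>s. \<Sum>i\<le>D. coeff (p s) i * \<Phi> (monom 1 i)) has_real_derivative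
        (\<Sum>i\<le>D. coeff pt i * \<Phi> (monom 1 i))) (at r within T)"
    using hd unfolding hasd_def by (intro DERIV_sum DERIV_cmult_right) auto
  then have "((\<lambda>s. \<Sum>i\<le>D. coeff (p s) i * \<Phi> (monom 1 i)) has_real_derivative \<Phi> pt) (at r within T)"
    using lin_expand[OF add sm degt] by simp
  then show ?thesis
  proof (rule has_field_derivative_transform_within[OF _ zero_less_one r])
    fix s assume "s \<in> T"
    then have "degree (p s) \<le> D" using deg by blast
    then show "(\<Sum>i\<le>D. coeff (p s) i * \<Phi> (monom 1 i)) = \<Phi> (p s)"
      using lin_expand[OF add sm, of "p s" D] by simp
  qed
qed

lemma deriv_unique0:
  assumes "(f has_real_derivative D) (at r within T)" "\<forall>s\<in>T. f s = 0" "r islimpt T" "r \<in> T"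
  shows "D = 0"
proof -
  have "((\<lambda>s. 0) has_real_derivative 0) (at r within T)" by simp
  then have "(f has_real_derivative 0) (at r within T)"
  proof (rule has_field_derivative_transform_within[OF _ zero_less_one assms(4)])
    fix s assume "s \<in> T" then show "0 = f s" using assms(2) by simp
  qed
  moreover have "at r within T \<noteq> bot" using assms(3) trivial_limit_within by blast
  ultimately show ?thesis using has_field_derivative_unique assms(1) by blast
qed

definition L :: "(nat \<Rightarrow> real) \<Rightarrow> nat \<Rightarrow> real poly \<Rightarrow> real" where
  "L x j p = cint x j (poly p)"

lemma poly_integrable: "(poly p) integrable_on {a..b::real}"
  by (intro integrable_continuous_real continuous_intros)

lemma L_add: "L x j (p + q) = L x j p + L x j q"
  unfolding L_def cint_def poly_add[abs_def] by (simp add: integral_add poly_integrable)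
lemma L_smult: "L x j (smult c p) = c * L x j p"
  unfolding L_def cint_def poly_smult[abs_def] by (simp add: poly_integrable)
lemma L_minus: "L x j (- p) = - L x j p"
  unfolding L_def cint_def poly_minus[abs_def] by (simp add: poly_integrable)
lemma L_diff: "L x j (p - q) = L x j p - L x j q"
  unfolding L_def cint_def poly_diff[abs_def] by (simp add: integral_diff poly_integrable)

lemma L_pderiv: assumes "x j \<le> x (Suc j)"
  shows "L x j (pderiv p) = poly p (x (Suc j)) - poly p (x j)"
proof -
  have "(poly (pderiv p) has_integral (poly p (x (Suc j)) - poly p (x j))) {x j..x (Suc j)}"
  proof (rule fundamental_theorem_of_calculus[OF assms])
    fix y :: real
    have "(poly p has_real_derivative poly (pderiv p) y) (at y within {x j..x (Suc j)})"
      by (rule has_field_derivative_at_within) (rule poly_DERIV)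
    then show "(poly p has_vector_derivative poly (pderiv p) y) (at y within {x j..x (Suc j)})"
      by (simp add: has_real_derivative_iff_has_vector_derivative)
  qed
  then show ?thesis unfolding L_def cint_def by (rule integral_unique)
qed

lemma cint_mult: "cint x j (\<lambda>y. poly p y * poly q y) = L x j (p * q)"
  unfolding L_def by (simp add: poly_mult[abs_def])


lemma C1_hasd: "C1_Vh N k T f ft \<Longrightarrow> i < N \<Longrightarrow> r \<in> T \<Longrightarrow> hasd T r (\<lambda>s. f s i) (ft r i)"
  unfolding C1_Vh_def hasd_def by blast

lemma C1_deg: "C1_Vh N k T f ft \<Longrightarrow> i < N \<Longrightarrow> s \<in> T \<Longrightarrow> degree (f s i) \<le> k \<and> degree (ft s i) \<le> k"
  unfolding C1_Vh_def in_Vh_def by blast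

lemma C1_Vh: "C1_Vh N k T f ft \<Longrightarrow> s \<in> T \<Longrightarrow> in_Vh N k (f s) \<and> in_Vh N k (ft s)"
  unfolding C1_Vh_def by blast

lemma d_Lmul:
  assumes "C1_Vh N k T f ft" "i < N" "r \<in> T"
  shows "((\<lambda>s. L x j (f s i * Q)) has_real_derivative L x j (ft r i * Q)) (at r within T)"
  by (rule lin_deriv[where \<Phi>="\<lambda>p. L x j (p * Q)" and D=k])
     (use assms C1_hasd C1_deg in \<open>auto simp: distrib_right L_add L_smult\<close>)

lemma d_poly:
  assumes "C1_Vh N k T f ft" "i < N" "r \<in> T"
  shows "((\<lambda>s. poly (f s i) y) has_real_derivative poly (ft r i) y) (at r within T)"
  by (rule lin_deriv[where \<Phi>="\<lambda>p. poly p y" and D=k])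
     (use assms C1_hasd C1_deg in \<open>auto\<close>)

lemma d_flux:
  assumes "C1_Vh N k T f ft" "i < N" "r \<in> T" "N \<ge> 1"
  shows "((\<lambda>s. flux N x a (f s) i) has_real_derivative flux N x a (ft r) i) (at r within T)"
proof -
  have m: "Suc i mod N < N" using assms by simp
  show ?thesis unfolding flux_def tr_plus_def tr_minus_def
    by (auto intro!: derivative_eq_intros d_poly[OF assms(1) m assms(3)] d_poly[OF assms(1,2,3)])
qed

lemma deg_mult: "degree p \<le> a \<Longrightarrow> degree q \<le> b \<Longrightarrow> a + b \<le> c \<Longrightarrow> degree (p * q) \<le> c"
  by (meson degree_mult_le le_trans add_mono)
lemma deg_add: "degree p \<le> c \<Longrightarrow> degree q \<le> c \<Longrightarrow> degree (p + q) \<le> c"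
  by (meson degree_add_le)
lemma deg_diff: "degree p \<le> c \<Longrightarrow> degree q \<le> c \<Longrightarrow> degree (p - q) \<le> (c::nat)"
  for p q :: "real poly" by (simp add: degree_diff_le)
lemma deg_smult: "degree p \<le> c \<Longrightarrow> degree (smult a p) \<le> c"
  by (meson degree_smult_le le_trans)

lemma prev_plus: "N \<ge> 1 \<Longrightarrow> j < N \<Longrightarrow> tr_plus N x f (prev_cell N j) = poly (f j) (x j)"
proof -
  assume "N \<ge> 1" "j < N"
  have "Suc ((j + N - 1) mod N) mod N = Suc (j + N - 1) mod N" by (rule mod_Suc_eq)
  also have "Suc (j + N - 1) = j + N" using \<open>N \<ge> 1\<close> by simp
  also have "(j + N) mod N = j" using \<open>j < N\<close> by simp
  finally show ?thesis unfolding tr_plus_def prev_cell_def by simp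
qed

lemma prev_reindex: assumes "N \<ge> 1" shows "(\<Sum>j<N. g (prev_cell N j)) = (\<Sum>j<N. (g j :: real))"
proof (rule sum.reindex_bij_witness[where i="\<lambda>j. Suc j mod N" and j="prev_cell N"])
  fix a assume a: "a \<in> {..<N}"
  show "prev_cell N a \<in> {..<N}" using assms by (simp add: prev_cell_def)
  have "Suc ((a + N - 1) mod N) mod N = Suc (a + N - 1) mod N" by (rule mod_Suc_eq)
  also have "Suc (a + N - 1) = a + N" using assms by simp
  finally show "Suc (prev_cell N a) mod N = a" using a by (simp add: prev_cell_def)
  show "g (prev_cell N a) = g (prev_cell N a)" ..
next
  fix b assume b: "b \<in> {..<N}"
  show "Suc b mod N \<in> {..<N}" using assms by simp
  show "prev_cell N (Suc b mod N) = b" unfolding prev_cell_def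
  proof -
    have "(Suc b mod N + N - 1) mod N = (Suc b mod N + (N - 1)) mod N" using assms by simp
    also have "\<dots> = (Suc b + (N - 1)) mod N" by (simp add: mod_add_left_eq)
    also have "Suc b + (N - 1) = b + N" using assms by simp
    finally show "(Suc b mod N + N - 1) mod N = b" using b by simp
  qed
qed

lemma key_alg:
  fixes PU A B C D WU UUU VV \<epsilon> \<eta> Fv Fvp Fut Futp Fw Fwp Fpt Fptp Vb Va Utb Uta Wb Wa Ptb Pta :: real
  assumes e2: "- 1/2 * PU + \<epsilon> * (A - Fv * Utb + Fvp * Uta) = - WU + \<eta> / 2 * UUU"
   and e3: "\<epsilon> * (- B + Fut * Vb - Futp * Va) = VV"
   and f1: "A + B = Vb * Utb - Va * Uta"
   and e1: "1/2 * PU - C + Fw * Ptb - Fwp * Pta = 0"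
   and e4: "D - Fpt * Wb + Fptp * Wa = - WU"
   and f2: "C + D = Wb * Ptb - Wa * Pta"
  shows "\<eta> / 2 * UUU - VV = (\<epsilon> * (Vb * Utb - Fv * Utb - Fut * Vb) + (- Wb * Ptb + Fw * Ptb + Fpt * Wb))
      - (\<epsilon> * (Va * Uta - Fvp * Uta - Futp * Va) + (- Wa * Pta + Fwp * Pta + Fptp * Wa))"
proof -
  have s1: "\<eta> / 2 * UUU = - 1/2 * PU + \<epsilon> * (A - Fv * Utb + Fvp * Uta) + WU" using e2 by linarith
  have s2: "\<epsilon> * (A - Fv * Utb + Fvp * Uta) + - VV = \<epsilon> * ((A + B) - Fv * Utb + Fvp * Uta - Fut * Vb + Futp * Va)"
    unfolding e3[symmetric] by (simp add: algebra_simps)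
  have s3: "\<epsilon> * ((A + B) - Fv * Utb + Fvp * Uta - Fut * Vb + Futp * Va) = \<epsilon> * (Vb * Utb - Va * Uta - Fv * Utb + Fvp * Uta - Fut * Vb + Futp * Va)"
    unfolding f1 ..
  have s4: "\<epsilon> * (Vb * Utb - Va * Uta - Fv * Utb + Fvp * Uta - Fut * Vb + Futp * Va)
     = \<epsilon> * (Vb * Utb - Fv * Utb - Fut * Vb) - \<epsilon> * (Va * Uta - Fvp * Uta - Futp * Va)"
    by (simp add: algebra_simps)
  have s5: "- 1/2 * PU + WU = (- Wb * Ptb + Fw * Ptb + Fpt * Wb) - (- Wa * Pta + Fwp * Pta + Fptp * Wa)"
    using e1 e4 f2 by linarith
  show ?thesis using s1 s2 s3 s4 s5 by linarith
qed

lemma iface_abs: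
  fixes e Vm Vp Um Up Wm Wp Pm Pp Fv Fu Fw Fp :: real
  assumes h1: "Fv*(Up-Um) + Fu*(Vp-Vm) = Vp*Up - Vm*Um" and h2: "Fw*(Pm-Pp) + Fp*(Wm-Wp) = Wm*Pm - Wp*Pp"
  shows "e*(Vm*Um - Fv*Um - Fu*Vm) + (-Wm*Pm + Fw*Pm + Fp*Wm) = e*(Vp*Up - Fv*Up - Fu*Vp) + (-Wp*Pp + Fw*Pp + Fp*Wp)"
proof -
  have "e*(Vm*Um - Fv*Um - Fu*Vm) - e*(Vp*Up - Fv*Up - Fu*Vp) = e*((Vm*Um - Vp*Up) + (Fv*(Up-Um) + Fu*(Vp-Vm)))"
    by (simp add: algebra_simps)
  also have "\<dots> = 0" using h1 by simp
  finally have a: "e*(Vm*Um - Fv*Um - Fu*Vm) = e*(Vp*Up - Fv*Up - Fu*Vp)" by simp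
  have b: "-Wm*Pm + Fw*Pm + Fp*Wm = -Wp*Pp + Fw*Pp + Fp*Wp" using h2 by (simp add: algebra_simps)
  show ?thesis using a b by simp
qed
lemma fl: fixes a Vp Vm Up Um :: real shows
  "((Vp + Vm)/2 + (-a) * (Vp - Vm))*(Up-Um) + ((Up + Um)/2 + a * (Up - Um))*(Vp-Vm) = Vp*Up - Vm*Um"
  by (simp add: field_simps)
lemma flip: fixes A B a b c d :: real
  assumes "A*(a-b) + B*(c-d) = c*a - d*b" shows "B*(d-c) + A*(b-a) = b*d - a*c"
proof -
  have "B*(d-c) + A*(b-a) = - (A*(a-b) + B*(c-d))" by (simp add: algebra_simps)
  also have "\<dots> = - (c*a - d*b)" by (simp only: assms)
  also have "\<dots> = b*d - a*c" by (simp add: algebra_simps)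
  finally show ?thesis .
qed

lemma iface:
  fixes \<epsilon> \<alpha>1 \<alpha>2 :: real
  shows "\<epsilon> * (tr_minus x v i * tr_minus x ut i - flux N x (-\<alpha>2) v i * tr_minus x ut i - flux N x \<alpha>2 ut i * tr_minus x v i)
     + (- tr_minus x w i * tr_minus x pt i + flux N x \<alpha>1 w i * tr_minus x pt i + flux N x (-\<alpha>1) pt i * tr_minus x w i)
   = \<epsilon> * (tr_plus N x v i * tr_plus N x ut i - flux N x (-\<alpha>2) v i * tr_plus N x ut i - flux N x \<alpha>2 ut i * tr_plus N x v i)
     + (- tr_plus N x w i * tr_plus N x pt i + flux N x \<alpha>1 w i * tr_plus N x pt i + flux N x (-\<alpha>1) pt i * tr_plus N x w i)"
  proof (rule iface_abs)
  show "flux N x (-\<alpha>2) v i * (tr_plus N x ut i - tr_minus x ut i) + flux N x \<alpha>2 ut i * (tr_plus N x v i - tr_minus x v i)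
     = tr_plus N x v i * tr_plus N x ut i - tr_minus x v i * tr_minus x ut i"
    unfolding flux_def by (rule fl)
  have "flux N x (-\<alpha>1) pt i * (tr_plus N x w i - tr_minus x w i) + flux N x \<alpha>1 w i * (tr_plus N x pt i - tr_minus x pt i)
     = tr_plus N x pt i * tr_plus N x w i - tr_minus x pt i * tr_minus x w i"
    unfolding flux_def by (rule fl)
  then show "flux N x \<alpha>1 w i * (tr_minus x pt i - tr_plus N x pt i) + flux N x (-\<alpha>1) pt i * (tr_minus x w i - tr_plus N x w i)
     = tr_minus x w i * tr_minus x pt i - tr_plus N x w i * tr_plus N x pt i"
    by (rule flip)
qed


theorem proposition4p2:
  fixes N k :: nat and x :: "nat \<Rightarrow> real" and T :: "real set"
    and \<eta> \<epsilon> \<alpha>1 \<alpha>2 :: real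
    and ph u v w pht ut vt wt :: "real \<Rightarrow> nat \<Rightarrow> real poly"
  assumes N: "N \<ge> 1"
    and mesh: "\<forall>j<N. x j < x (Suc j)"
    and T: "is_interval T"
    and C1: "C1_Vh N k T ph pht" "C1_Vh N k T u ut" "C1_Vh N k T v vt" "C1_Vh N k T w wt"
    and eq1: "\<forall>t\<in>T. \<forall>j<N. \<forall>\<phi>. in_Vh N k \<phi> \<longrightarrow>
        1/2 * cint x j (\<lambda>y. poly (ut t j) y * poly (\<phi> j) y)
        - cint x j (\<lambda>y. poly (w t j) y * poly (pderiv (\<phi> j)) y)
        + flux N x \<alpha>1 (w t) j * poly (\<phi> j) (x (Suc j))
        - flux N x \<alpha>1 (w t) (prev_cell N j) * poly (\<phi> j) (x j) = 0"
    and eq2: "\<forall>t\<in>T. \<forall>j<N. \<forall>\<phi>. in_Vh N k \<phi> \<longrightarrow>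
        - 1/2 * cint x j (\<lambda>y. poly (pht t j) y * poly (\<phi> j) y)
        + \<epsilon> * (cint x j (\<lambda>y. poly (v t j) y * poly (pderiv (\<phi> j)) y)
                - flux N x (- \<alpha>2) (v t) j * poly (\<phi> j) (x (Suc j))
                + flux N x (- \<alpha>2) (v t) (prev_cell N j) * poly (\<phi> j) (x j))
        = cint x j (\<lambda>y. (- poly (w t j) y + \<eta> / 2 * poly (u t j) y ^ 2) * poly (\<phi> j) y)"
    and eq3: "\<forall>t\<in>T. \<forall>j<N. \<forall>\<phi>. in_Vh N k \<phi> \<longrightarrow>
        \<epsilon> * (- cint x j (\<lambda>y. poly (u t j) y * poly (pderiv (\<phi> j)) y)
                + flux N x \<alpha>2 (u t) j * poly (\<phi> j) (x (Suc j))
                - flux N x \<alpha>2 (u t) (prev_cell N j) * poly (\<phi> j) (x j))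
        = cint x j (\<lambda>y. poly (v t j) y * poly (\<phi> j) y)"
    and eq4: "\<forall>t\<in>T. \<forall>j<N. \<forall>\<phi>. in_Vh N k \<phi> \<longrightarrow>
        cint x j (\<lambda>y. poly (ph t j) y * poly (pderiv (\<phi> j)) y)
        - flux N x (- \<alpha>1) (ph t) j * poly (\<phi> j) (x (Suc j))
        + flux N x (- \<alpha>1) (ph t) (prev_cell N j) * poly (\<phi> j) (x j)
        = - cint x j (\<lambda>y. poly (u t j) y * poly (\<phi> j) y)"
  shows "\<forall>s\<in>T. \<forall>t\<in>T. energy N x \<eta> (u s) (v s) = energy N x \<eta> (u t) (v t)"
proof -
  have pN: "prev_cell N j < N" for j using N by (simp add: prev_cell_def)
  have key: "((\<lambda>s. energy N x \<eta> (u s) (v s)) has_real_derivative 0) (at r within T)"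
    if r: "r \<in> T" and lim: "r islimpt T" for r
  proof -
    define Ed where "Ed j = smult (\<eta>/6) (ut r j * (u r j * u r j) + u r j * (ut r j * u r j + u r j * ut r j))
       - smult (1/2) (vt r j * v r j + v r j * vt r j)" for j
    define Hm where "Hm i = \<epsilon> * (tr_minus x (v r) i * tr_minus x (ut r) i - flux N x (-\<alpha>2) (v r) i * tr_minus x (ut r) i - flux N x \<alpha>2 (ut r) i * tr_minus x (v r) i)
     + (- tr_minus x (w r) i * tr_minus x (pht r) i + flux N x \<alpha>1 (w r) i * tr_minus x (pht r) i + flux N x (-\<alpha>1) (pht r) i * tr_minus x (w r) i)" for i
    define Hp where "Hp i = \<epsilon> * (tr_plus N x (v r) i * tr_plus N x (ut r) i - flux N x (-\<alpha>2) (v r) i * tr_plus N x (ut r) i - flux N x \<alpha>2 (ut r) i * tr_plus N x (v r) i)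
     + (- tr_plus N x (w r) i * tr_plus N x (pht r) i + flux N x \<alpha>1 (w r) i * tr_plus N x (pht r) i + flux N x (-\<alpha>1) (pht r) i * tr_plus N x (w r) i)" for i
    have en: "energy N x \<eta> (u s) (v s) = (\<Sum>j<N. L x j (smult (\<eta>/6) (u s j * (u s j * u s j)) - smult (1/2) (v s j * v s j)))" for s
    proof -
      have "poly (smult (\<eta>/6) (u s j * (u s j * u s j)) - smult (1/2) (v s j * v s j))
          = (\<lambda>y. \<eta> / 6 * poly (u s j) y ^ 3 - 1/2 * poly (v s j) y ^ 2)" for j
        by (rule ext) (simp add: power3_eq_cube power2_eq_square)
      then show ?thesis unfolding energy_def L_def by simp
    qed
    have dE: "((\<lambda>s. energy N x \<eta> (u s) (v s)) has_real_derivative (\<Sum>j<N. L x j (Ed j))) (at r within T)"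
      unfolding en
    proof (rule DERIV_sum)
      fix j assume "j \<in> {..<N}"
      then have j: "j < N" by simp
      have hu: "hasd T r (\<lambda>s. u s j) (ut r j)" by (rule C1_hasd[OF C1(2) j r])
      have hv: "hasd T r (\<lambda>s. v s j) (vt r j)" by (rule C1_hasd[OF C1(3) j r])
      have hd: "hasd T r (\<lambda>s. smult (\<eta>/6) (u s j * (u s j * u s j)) - smult (1/2) (v s j * v s j)) (Ed j)"
        unfolding Ed_def by (intro hasd_diff hasd_smult hasd_mult hu hv)
      have dg: "degree (smult (\<eta>/6) (u s j * (u s j * u s j)) - smult (1/2) (v s j * v s j)) \<le> 3 * k"
        if s: "s \<in> T" for s
      proof -
        have du: "degree (u s j) \<le> k" and dv: "degree (v s j) \<le> k"
          using C1_deg[OF C1(2) j s] C1_deg[OF C1(3) j s] by auto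
        have a: "degree (u s j * (u s j * u s j)) \<le> 3 * k"
          by (rule deg_mult[OF du deg_mult[OF du du order_refl]]) simp
        have b: "degree (v s j * v s j) \<le> 3 * k" by (rule deg_mult[OF dv dv]) simp
        show ?thesis by (intro deg_diff deg_smult a b)
      qed
      have dgt: "degree (Ed j) \<le> 3 * k"
      proof -
        have du: "degree (u r j) \<le> k" and dv: "degree (v r j) \<le> k"
         and dut: "degree (ut r j) \<le> k" and dvt: "degree (vt r j) \<le> k"
          using C1_deg[OF C1(2) j r] C1_deg[OF C1(3) j r] by auto
        have a1: "degree (ut r j * (u r j * u r j)) \<le> 3 * k"
          by (rule deg_mult[OF dut deg_mult[OF du du order_refl]]) simp
        have a2: "degree (u r j * (ut r j * u r j + u r j * ut r j)) \<le> 3 * k"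
          by (rule deg_mult[OF du deg_add[OF deg_mult[OF dut du order_refl] deg_mult[OF du dut]]]) auto
        have b: "degree (vt r j * v r j + v r j * vt r j) \<le> 3 * k"
          by (rule deg_add; rule deg_mult) (use dv dvt in auto)
        show ?thesis unfolding Ed_def by (intro deg_diff deg_smult deg_add a1 a2 b)
      qed
      show "((\<lambda>s. L x j (smult (\<eta>/6) (u s j * (u s j * u s j)) - smult (1/2) (v s j * v s j)))
          has_real_derivative L x j (Ed j)) (at r within T)"
        by (rule lin_deriv[OF L_add L_smult hd _ dgt r]) (use dg in auto)
    qed
    have cell: "L x j (Ed j) = Hm j - Hp (prev_cell N j)" if j: "j < N" for j
    proof -
      let ?pj = "prev_cell N j"
      have le: "x j \<le> x (Suc j)" using mesh j by (simp add: less_imp_le)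
      have rhs2: "cint x j (\<lambda>y. (- poly (w r j) y + \<eta> / 2 * poly (u r j) y ^ 2) * poly (ut r j) y)
          = - L x j (w r j * ut r j) + \<eta> / 2 * L x j (u r j * (u r j * ut r j))"
      proof -
        have "(\<lambda>y. (- poly (w r j) y + \<eta> / 2 * poly (u r j) y ^ 2) * poly (ut r j) y)
            = poly (- (w r j * ut r j) + smult (\<eta>/2) (u r j * (u r j * ut r j)))"
          by (rule ext) (simp add: algebra_simps power2_eq_square)
        then have "cint x j (\<lambda>y. (- poly (w r j) y + \<eta> / 2 * poly (u r j) y ^ 2) * poly (ut r j) y)
            = L x j (- (w r j * ut r j) + smult (\<eta>/2) (u r j * (u r j * ut r j)))"
          unfolding L_def by (simp only:)
        also have "\<dots> = - L x j (w r j * ut r j) + \<eta> / 2 * L x j (u r j * (u r j * ut r j))"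
          by (simp only: L_add L_minus L_smult)
        finally show ?thesis .
      qed
      have e2: "- 1/2 * L x j (pht r j * ut r j) + \<epsilon> * (L x j (v r j * pderiv (ut r j))
           - flux N x (- \<alpha>2) (v r) j * poly (ut r j) (x (Suc j))
           + flux N x (- \<alpha>2) (v r) ?pj * poly (ut r j) (x j))
          = - L x j (w r j * ut r j) + \<eta> / 2 * L x j (u r j * (u r j * ut r j))"
        using eq2[rule_format, OF r j C1_Vh[OF C1(2) r, THEN conjunct2]] unfolding cint_mult rhs2 .
      have e1: "1/2 * L x j (ut r j * pht r j) - L x j (w r j * pderiv (pht r j))
          + flux N x \<alpha>1 (w r) j * poly (pht r j) (x (Suc j))
          - flux N x \<alpha>1 (w r) ?pj * poly (pht r j) (x j) = 0"
        using eq1[rule_format, OF r j C1_Vh[OF C1(1) r, THEN conjunct2]] unfolding cint_mult .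
      define g3 where "g3 s = \<epsilon> * (- L x j (u s j * pderiv (v r j)) + flux N x \<alpha>2 (u s) j * poly (v r j) (x (Suc j))
          - flux N x \<alpha>2 (u s) ?pj * poly (v r j) (x j)) - L x j (v s j * v r j)" for s
      have g3z: "\<forall>s\<in>T. g3 s = 0"
      proof
        fix s assume s: "s \<in> T"
        show "g3 s = 0" using eq3[rule_format, OF s j C1_Vh[OF C1(3) r, THEN conjunct1]]
          unfolding cint_mult g3_def by simp
      qed
      have g3d: "(g3 has_real_derivative (\<epsilon> * (- L x j (ut r j * pderiv (v r j)) + flux N x \<alpha>2 (ut r) j * poly (v r j) (x (Suc j))
          - flux N x \<alpha>2 (ut r) ?pj * poly (v r j) (x j)) - L x j (vt r j * v r j))) (at r within T)"
        unfolding g3_def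
        by (intro DERIV_diff DERIV_cmult DERIV_add DERIV_minus DERIV_cmult_right
              d_Lmul[OF C1(2) j r] d_Lmul[OF C1(3) j r] d_flux[OF C1(2) j r N] d_flux[OF C1(2) pN r N])
      have e3: "\<epsilon> * (- L x j (ut r j * pderiv (v r j)) + flux N x \<alpha>2 (ut r) j * poly (v r j) (x (Suc j))
          - flux N x \<alpha>2 (ut r) ?pj * poly (v r j) (x j)) = L x j (vt r j * v r j)"
        using deriv_unique0[OF g3d g3z lim r] by simp
      define g4 where "g4 s = L x j (ph s j * pderiv (w r j)) - flux N x (- \<alpha>1) (ph s) j * poly (w r j) (x (Suc j))
          + flux N x (- \<alpha>1) (ph s) ?pj * poly (w r j) (x j) + L x j (u s j * w r j)" for s
      have g4z: "\<forall>s\<in>T. g4 s = 0"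
      proof
        fix s assume s: "s \<in> T"
        show "g4 s = 0" using eq4[rule_format, OF s j C1_Vh[OF C1(4) r, THEN conjunct1]]
          unfolding cint_mult g4_def by simp
      qed
      have g4d: "(g4 has_real_derivative (L x j (pht r j * pderiv (w r j)) - flux N x (- \<alpha>1) (pht r) j * poly (w r j) (x (Suc j))
          + flux N x (- \<alpha>1) (pht r) ?pj * poly (w r j) (x j) + L x j (ut r j * w r j))) (at r within T)"
        unfolding g4_def
        by (intro DERIV_diff DERIV_add DERIV_cmult_right
              d_Lmul[OF C1(1) j r] d_Lmul[OF C1(2) j r] d_flux[OF C1(1) j r N] d_flux[OF C1(1) pN r N])
      have e4: "L x j (pht r j * pderiv (w r j)) - flux N x (- \<alpha>1) (pht r) j * poly (w r j) (x (Suc j))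
          + flux N x (- \<alpha>1) (pht r) ?pj * poly (w r j) (x j) = - L x j (ut r j * w r j)"
        using deriv_unique0[OF g4d g4z lim r] by simp
      have f1: "L x j (v r j * pderiv (ut r j)) + L x j (ut r j * pderiv (v r j))
          = poly (v r j) (x (Suc j)) * poly (ut r j) (x (Suc j)) - poly (v r j) (x j) * poly (ut r j) (x j)"
        using L_pderiv[OF le, of "v r j * ut r j"] by (simp add: pderiv_mult L_add)
      have f2: "L x j (w r j * pderiv (pht r j)) + L x j (pht r j * pderiv (w r j))
          = poly (w r j) (x (Suc j)) * poly (pht r j) (x (Suc j)) - poly (w r j) (x j) * poly (pht r j) (x j)"
        using L_pderiv[OF le, of "w r j * pht r j"] by (simp add: pderiv_mult L_add)
      have c1: "L x j (ut r j * pht r j) = L x j (pht r j * ut r j)" by (simp add: mult.commute)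
      have c2: "L x j (ut r j * w r j) = L x j (w r j * ut r j)" by (simp add: mult.commute)
      have eE: "L x j (Ed j) = \<eta> / 2 * L x j (u r j * (u r j * ut r j)) - L x j (vt r j * v r j)"
      proof -
        have p1: "ut r j * (u r j * u r j) = u r j * (u r j * ut r j)" by (simp add: mult_ac)
        have p2: "u r j * (ut r j * u r j + u r j * ut r j) = u r j * (u r j * ut r j) + u r j * (u r j * ut r j)"
          by (simp add: distrib_left mult.commute)
        have p3: "vt r j * v r j + v r j * vt r j = vt r j * v r j + vt r j * v r j"
          by (simp add: mult.commute)
        have "L x j (Ed j) = \<eta> / 6 * (L x j (u r j * (u r j * ut r j)) + (L x j (u r j * (u r j * ut r j)) + L x j (u r j * (u r j * ut r j))))
            - 1/2 * (L x j (vt r j * v r j) + L x j (vt r j * v r j))"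
          unfolding Ed_def p1 p2 p3 by (simp only: L_add L_diff L_smult)
        then show ?thesis by (simp add: field_simps)
      qed
      show ?thesis
        unfolding eE Hm_def Hp_def prev_plus[OF N j] tr_minus_def
        by (rule key_alg[OF e2 e3 f1 e1[unfolded c1] e4[unfolded c2] f2])
    qed
    have "(\<Sum>j<N. L x j (Ed j)) = (\<Sum>j<N. Hm j) - (\<Sum>j<N. Hp (prev_cell N j))"
      using cell by (simp add: sum_subtractf)
    also have "\<dots> = (\<Sum>j<N. Hm j) - (\<Sum>j<N. Hp j)" using prev_reindex[OF N] by simp
    also have "\<dots> = 0" unfolding Hm_def Hp_def using iface by simp
    finally show ?thesis using dE by simp
  qed
  show ?thesis
  proof (intro ballI)
    fix s t assume s: "s \<in> T" and t: "t \<in> T"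
    show "energy N x \<eta> (u s) (v s) = energy N x \<eta> (u t) (v t)"
    proof (cases "s = t")
      case True then show ?thesis by simp
    next
      case False
      have lim: "r islimpt T" if r: "r \<in> T" for r
      proof -
        define q where "q = (if r = s then t else s)"
        have q: "q \<in> T" "q \<noteq> r" using False s t unfolding q_def by auto
        have sub: "{min r q..max r q} \<subseteq> T"
        proof
          fix y assume y: "y \<in> {min r q..max r q}"
          show "y \<in> T"
          proof (cases "r \<le> q")
            case True
            then have "r \<le> y \<and> y \<le> q" using y by simp
            then show ?thesis using T[unfolded is_interval_1] r q(1) by blast
          next
            case False
            then have "q \<le> y \<and> y \<le> r" using y by simp
            then show ?thesis using T[unfolded is_interval_1] r q(1) by blast
          qed
        qed
        have mm: "min r q < max r q" using q(2) by (cases "r \<le> q") auto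
        have "r \<in> {min r q..max r q}" by simp
        then have "r islimpt {min r q..max r q}" using islimpt_Icc[OF mm] by simp
        then show ?thesis using sub by (rule islimpt_subset)
      qed
      have dz: "\<And>y. y \<in> T \<Longrightarrow> ((\<lambda>s. energy N x \<eta> (u s) (v s)) has_real_derivative 0) (at y within T)"
        using key lim by simp
      obtain c where "\<forall>y\<in>T. energy N x \<eta> (u y) (v y) = c"
        using has_field_derivative_zero_constant[OF is_interval_convex[OF T] dz] by blast
      then show ?thesis using s t by simp
    qed
  qed
qed

end
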